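(* Consider the Public WOM model described in the context. Every solution $(p_2^*,\underline{k}^* )$ of the seller's problem $$\max_{p_2\in[0,1],\ \underline{k}}\ \pi(p_2,\underline{k})=(1-\beta)+\beta\left(p_2-\frac{c}{\underline{k}\,\phi(L(\underline{k}),p_2)}\right)(1-p_2)\,\Gamma(L(\underline{k}))$$ satisfies $p_2^*=1/2$, the corresponding bonus is $b=\dfrac{c}{\underline{k}^*\,\phi(L(\underline{k}^* ),p_2^* )}$, and $$\underline{k}^*\in\arg\max_{\underline{k}}\left[\frac{\Gamma(L(\underline{k}))}{4}-\frac{c\,\Gamma(L(\underline{k}))}{2\,\underline{k}\,\phi(L(\underline{k}),1/2)}\right].$$
   Context: A seller (zero marginal cost) faces a unit mass of consumers, each demanding at most one unit. A fraction $1-\beta\in(0,1)$ is informed about the product and has reservation value $1$ (they are charged price $p_1=1$); the fraction $\beta$ is uninformed, with reservation value $v\sim U[0,1]$, and is charged price $p_2$, so an informed-by-referral consumer buys with probability $1-p_2$. Informed consumers are linked to uninformed ones by a directed bipartite network: out-degrees of informed consumers follow a probability distribution $f$ on the positive integers, in-degrees of uninformed consumers follow a distribution $g$, with $(1-\beta)\sum_k k f(k)=\beta\sum_k k g(k)$. If a fraction $L\in[0,1]$ of links carries information, the fraction of uninformed consumers who receive it is $\Gamma(L)=1-\sum_{k} g(k)(1-L)^k$, and the expected value, per unit of bonus, that an informed consumer gets from passing information along one link is $\phi(L,p_2)=(1-p_2)\sum_k g(k)\frac{1-(1-L)^k}{kL}$. The seller pays a bonus $b$ per successful referral. Public WOM: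 an informed consumer with out-degree $k$ can inform all her out-neighbours at a lump-sum cost $c>0$, and does so iff $k\,b\,\phi(L,p_2)\ge c$; hence there is a degree cutoff $\underline{k}$, the fraction of active links is $L(\underline{k})=\sum_{k\ge\underline{k}}f(k)$, and the bonus implementing cutoff $\underline{k}$ is $b=c/(\underline{k}\,\phi(L(\underline{k}),p_2))$, so the seller's problem reduces to choosing $(p_2,\underline{k})$ as in the claim. *)

theory Defs
  imports Complex_Main
begin

definition is_degree_dist :: "(nat \<Rightarrow> real) \<Rightarrow> bool" where
  "is_degree_dist h \<longleftrightarrow> (\<forall>k. 0 \<le> h k) \<and> h 0 = 0 \<and> h sums 1"

text \<open>Fraction of uninformed consumers reached when a fraction L of links is active.\<close>
definition Gamma :: "(nat \<Rightarrow> real) \<Rightarrow> real \<Rightarrow> real" where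
  "Gamma g L = 1 - (\<Sum>k. g k * (1 - L) ^ k)"

text \<open>Expected value per unit of bonus of passing information along one link.\<close>
definition phi :: "(nat \<Rightarrow> real) \<Rightarrow> real \<Rightarrow> real \<Rightarrow> real" where
  "phi g L p2 = (1 - p2) * (\<Sum>k. g k * (1 - (1 - L) ^ k) / (real k * L))"

text \<open>Fraction of active links under degree cutoff kk.\<close>
definition Lcut :: "(nat \<Rightarrow> real) \<Rightarrow> nat \<Rightarrow> real" where
  "Lcut f kk = (\<Sum>k. if kk \<le> k then f k else 0)"

definition bonus :: "real \<Rightarrow> (nat \<Rightarrow> real) \<Rightarrow> (nat \<Rightarrow> real) \<Rightarrow> real \<Rightarrow> nat \<Rightarrow> real" where
  "bonus c f g p2 kk = c / (real kk * phi g (Lcut f kk) p2)"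

definition profit :: "real \<Rightarrow> real \<Rightarrow> (nat \<Rightarrow> real) \<Rightarrow> (nat \<Rightarrow> real) \<Rightarrow> real \<Rightarrow> nat \<Rightarrow> real" where
  "profit beta c f g p2 kk =
     (1 - beta) + beta * (p2 - c / (real kk * phi g (Lcut f kk) p2)) * (1 - p2) * Gamma g (Lcut f kk)"

text \<open>Feasible choices: price in [0,1], cutoff a positive integer, and the implementing
bonus c/(kk * phi) well defined (phi > 0, i.e. the denominator is nonzero).\<close>
definition feasible :: "(nat \<Rightarrow> real) \<Rightarrow> (nat \<Rightarrow> real) \<Rightarrow> real \<Rightarrow> nat \<Rightarrow> bool" where
  "feasible f g p2 kk \<longleftrightarrow> 0 \<le> p2 \<and> p2 \<le> 1 \<and> 1 \<le> kk \<and> 0 < phi g (Lcut f kk) p2"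

end

theory Submission
  imports Defs
begin

lemma Gamma_pos:
  assumes f: "is_degree_dist f" and g: "is_degree_dist g"
    and ph: "0 < phi g (Lcut f kk) p2"
  shows "0 < Gamma g (Lcut f kk)"
proof -
  define L where "L = Lcut f kk"
  have fs: "summable f" and f0: "\<And>k. 0 \<le> f k" and f1: "suminf f = 1"
    using f unfolding is_degree_dist_def by (auto simp: sums_iff)
  have gs: "summable g" and g0: "\<And>k. 0 \<le> g k" and gz: "g 0 = 0" and g1: "suminf g = 1"
    using g unfolding is_degree_dist_def by (auto simp: sums_iff)
  have cs: "summable (\<lambda>k. if kk \<le> k then f k else 0)"
    by (rule summable_comparison_test'[OF fs]) (auto simp: f0)
  have L0: "0 \<le> L" unfolding L_def Lcut_def by (rule suminf_nonneg[OF cs]) (auto simp: f0)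
  have L1: "L \<le> 1" unfolding L_def Lcut_def f1[symmetric]
    by (rule suminf_le[OF _ cs fs]) (auto simp: f0)
  have "L \<noteq> 0"
  proof
    assume "L = 0"
    then have "phi g L p2 = 0" unfolding phi_def by simp
    with ph show False unfolding L_def by simp
  qed
  with L0 have Lp: "0 < L" by simp
  have ps: "summable (\<lambda>k. g k * (1 - L) ^ k)"
    by (rule summable_comparison_test'[OF gs, of 0])
       (use g0 L0 L1 in \<open>auto simp: abs_mult intro!: mult_left_le_one_le power_le_one mult_right_le_one_le\<close>)
  obtain i where gi: "0 < g i" using suminf_pos_iff[OF gs g0] g1 by auto
  have "i \<noteq> 0" using gz gi by (cases i) auto
  then have "(1 - L) ^ i < 1" using L1 Lp
    by (simp add: power_less_one_iff)
  then have "0 < g i * (1 - (1 - L) ^ i)" using gi by simp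
  moreover have "summable (\<lambda>k. g k * (1 - (1 - L) ^ k))"
    using summable_diff[OF gs ps] by (simp add: algebra_simps)
  moreover have "\<And>k. 0 \<le> g k * (1 - (1 - L) ^ k)"
    using g0 L0 L1 by (simp add: power_le_one)
  ultimately have "0 < (\<Sum>k. g k * (1 - (1 - L) ^ k))"
    using suminf_pos_iff by blast
  also have "(\<Sum>k. g k * (1 - (1 - L) ^ k)) = suminf g - (\<Sum>k. g k * (1 - L) ^ k)"
    using suminf_diff[OF gs ps] by (simp add: algebra_simps)
  finally show ?thesis unfolding Gamma_def L_def[symmetric] g1 .
qed

theorem proposition1:
  fixes f g :: "nat \<Rightarrow> real" and beta c :: real and p2s :: real and ks :: nat
  assumes beta: "0 < beta" "beta < 1"
    and c: "0 < c"
    and f: "is_degree_dist f" and g: "is_degree_dist g"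
    and fmean: "summable (\<lambda>k. real k * f k)" and gmean: "summable (\<lambda>k. real k * g k)"
    and balance: "(1 - beta) * (\<Sum>k. real k * f k) = beta * (\<Sum>k. real k * g k)"
    and sol_feas: "feasible f g p2s ks"
    and sol_opt: "\<forall>p2 kk. feasible f g p2 kk \<longrightarrow> profit beta c f g p2 kk \<le> profit beta c f g p2s ks"
  shows "p2s = 1/2
    \<and> bonus c f g p2s ks = c / (real ks * phi g (Lcut f ks) p2s)
    \<and> (\<forall>kk. feasible f g (1/2) kk \<longrightarrow>
          Gamma g (Lcut f kk) / 4 - c * Gamma g (Lcut f kk) / (2 * real kk * phi g (Lcut f kk) (1/2))
          \<le> Gamma g (Lcut f ks) / 4 - c * Gamma g (Lcut f ks) / (2 * real ks * phi g (Lcut f ks) (1/2)))"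
proof -
  define S where "S kk = (\<Sum>k. g k * (1 - (1 - Lcut f kk) ^ k) / (real k * Lcut f kk))" for kk
  have phiS: "\<And>kk p. phi g (Lcut f kk) p = (1 - p) * S kk" unfolding phi_def S_def by simp
  have prof: "\<And>p kk. feasible f g p kk \<Longrightarrow> profit beta c f g p kk
     = (1 - beta) + beta * Gamma g (Lcut f kk) * (p * (1 - p) - c / (real kk * S kk))"
  proof -
    fix p kk assume fe: "feasible f g p kk"
    then have "p < 1" "S kk > 0" "real kk > 0" unfolding feasible_def phiS
      by (auto simp: zero_less_mult_iff)
    then show "?thesis p kk" unfolding profit_def phiS
      by (simp add: field_simps)
  qed
  have fs: "0 \<le> p2s" "p2s < 1" "S ks > 0" "1 \<le> ks" "0 < phi g (Lcut f ks) p2s"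
    using sol_feas unfolding feasible_def phiS by (auto simp: zero_less_mult_iff)
  have fh: "feasible f g (1/2) ks" using fs unfolding feasible_def phiS by simp
  have Gp: "0 < Gamma g (Lcut f ks)" using Gamma_pos[OF f g fs(5)] .
  have "profit beta c f g (1/2) ks \<le> profit beta c f g p2s ks" using sol_opt fh by blast
  then have "beta * Gamma g (Lcut f ks) * (1/2 * (1 - 1/2) - c / (real ks * S ks)) \<le> beta * Gamma g (Lcut f ks) * (p2s * (1 - p2s) - c / (real ks * S ks))"
    unfolding prof[OF fh] prof[OF sol_feas] by simp
  then have "beta * Gamma g (Lcut f ks) * (1/2 * (1 - 1/2)) \<le> beta * Gamma g (Lcut f ks) * (p2s * (1 - p2s))"
    by (simp only: right_diff_distrib)
  then have "1/2 * (1 - 1/2) \<le> p2s * (1 - p2s)"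
    by (rule mult_left_le_imp_le) (use beta Gp in simp)
  then have "(p2s - 1/2)^2 \<le> 0" by (simp add: power2_eq_square algebra_simps)
  then have p12: "p2s = 1/2" by simp
  have "\<forall>kk. feasible f g (1/2) kk \<longrightarrow>
          Gamma g (Lcut f kk) / 4 - c * Gamma g (Lcut f kk) / (2 * real kk * phi g (Lcut f kk) (1/2))
          \<le> Gamma g (Lcut f ks) / 4 - c * Gamma g (Lcut f ks) / (2 * real ks * phi g (Lcut f ks) (1/2))"
  proof (intro allI impI)
    fix kk assume fk: "feasible f g (1/2) kk"
    have e: "\<And>k. Gamma g (Lcut f k) / 4 - c * Gamma g (Lcut f k) / (2 * real k * phi g (Lcut f k) (1/2))
       = Gamma g (Lcut f k) * (1/2 * (1 - 1/2) - c / (real k * S k))"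
      unfolding phiS by (simp add: field_simps)
    have "profit beta c f g (1/2) kk \<le> profit beta c f g (1/2) ks"
      using sol_opt fk p12 by blast
    then have "beta * (Gamma g (Lcut f kk) * (1/2 * (1 - 1/2) - c / (real kk * S kk)))
      \<le> beta * (Gamma g (Lcut f ks) * (1/2 * (1 - 1/2) - c / (real ks * S ks)))"
      unfolding prof[OF fk] prof[OF fh] by (simp only: mult.assoc add_le_cancel_left)
    then show "Gamma g (Lcut f kk) / 4 - c * Gamma g (Lcut f kk) / (2 * real kk * phi g (Lcut f kk) (1/2))
          \<le> Gamma g (Lcut f ks) / 4 - c * Gamma g (Lcut f ks) / (2 * real ks * phi g (Lcut f ks) (1/2))"
      unfolding e by (rule mult_left_le_imp_le) (use beta in simp)
  qed
  then show ?thesis using p12 unfolding bonus_def by simp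
qed

end
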